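(* Every lexicographic transduction $f:\Sigma^*\rightharpoonup\Gamma^*$ (i.e. $f\in\mathsf{Lex}$) is regularity preserving: for every regular language $L\subseteq\Gamma^*$, the set $f^{-1}(L)=\{u\in\mathrm{dom}(f): f(u)\in L\}$ is regular.
   Context: Alphabets are finite. For words $u,v$ of equal length over alphabets $\Sigma_1,\Sigma_2$, $u\otimes v$ is the word over $\Sigma_1\times\Sigma_2$ with $(u\otimes v)[i]=(u[i],v[i])$. A transduction is a partial function $f:\Sigma^*\rightharpoonup\Gamma^*$. A simple transduction is a transduction $f=\sum_{i=1}^n L_i\triangleright w_i$, where $L_1,\dots,L_n\subseteq\Sigma^*$ are pairwise disjoint regular languages and each $w_i\in\Gamma^{\le 1}$ is a word of length at most 1. It satisfies $f(u)=w_i$ if $u\in L_i$, and $f(u)$ is undefined if $u\notin\bigcup_iL_i$. An ordered alphabet is a pair $\lambda=(B,\prec)$ with $B$ a finite set and $\prec$ a strict linear order on $B$. The order is extended to $B^n$ for each $n$ by: $u\prec v$ iff there is $i\le n$ with $u[i]\prec v[i]$ and $u[j]=v[j]$ for all $i<j\le n$ (most significant letter on the right). For a transduction $f:(\Sigma\times B)^*\rightharpoonup\Gamma^*$, the transduction $\mathsf{maplex}_\lambda f:\Sigma^*\rightharpoonup\Gamma^*$ maps $u$ to $f(u\otimes b_1)f(u\otimes b_2)\cdots f(u\otimes b_m)$, where $b_1\prec\cdots\prec b_m$ is the increasing enumeration of all of $B^{|u|}$. It is defined on $u$ iff every $f(u\otimes b_j)$ is defined. The classes are defined inductively: - $\mathsf{Lex}_0$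 is the class of simple transductions; - $\mathsf{Lex}_{k+1}=\{\mathsf{maplex}_\lambda f: \lambda=(B,\prec)\text{ an ordered alphabet},\ f:(\Sigma\times B)^*\rightharpoonup\Gamma^*\text{ in }\mathsf{Lex}_k\}$; - $\mathsf{Lex}=\bigcup_k\mathsf{Lex}_k$, the lexicographic transductions. Elements of $\mathsf{Lex}_k$ are called $k$-lexicographic. *)

theory Defs
  imports Main
begin

text \<open>The input alphabet of a (k+1)-lexicographic transduction is a
product Sig x B of the previous alphabet with an ordered alphabet B.  To keep a
single type across all levels, a pair (s, b) of a letter s and a B-letter b is
encoded by the constructor Ext s b; base letters are Base a.\<close>

datatype ('a, 'b) ltr = Base 'a | Ext "('a, 'b) ltr" 'b

definition regular :: "'c set \<Rightarrow> 'c list set \<Rightarrow> bool" where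
  "regular Sig L \<longleftrightarrow> finite Sig \<and> L \<subseteq> lists Sig \<and>
     (\<exists>(Q :: nat set) q0 \<delta> F. finite Q \<and> q0 \<in> Q \<and> F \<subseteq> Q \<and>
        (\<forall>q\<in>Q. \<forall>a\<in>Sig. \<delta> q a \<in> Q) \<and>
        L = {w \<in> lists Sig. fold (\<lambda>a q. \<delta> q a) w q0 \<in> F})"

definition simple_trans :: "'c set \<Rightarrow> 'g set \<Rightarrow> ('c list \<Rightarrow> 'g list option) \<Rightarrow> bool" where
  "simple_trans Sig Gamma f \<longleftrightarrow>
     (\<exists>(n :: nat) Ls ws.
        (\<forall>i<n. regular Sig (Ls i) \<and> length (ws i) \<le> 1 \<and> set (ws i) \<subseteq> Gamma) \<and>
        (\<forall>i<n. \<forall>j<n. i \<noteq> j \<longrightarrow> Ls i \<inter> Ls j = {}) \<and>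
        (\<forall>u. (\<forall>i<n. u \<in> Ls i \<longrightarrow> f u = Some (ws i)) \<and>
             ((\<forall>i<n. u \<notin> Ls i) \<longrightarrow> f u = None)))"

definition strict_linear_on :: "'b set \<Rightarrow> ('b \<Rightarrow> 'b \<Rightarrow> bool) \<Rightarrow> bool" where
  "strict_linear_on B lt \<longleftrightarrow>
     (\<forall>x\<in>B. \<not> lt x x) \<and>
     (\<forall>x\<in>B. \<forall>y\<in>B. \<forall>z\<in>B. lt x y \<longrightarrow> lt y z \<longrightarrow> lt x z) \<and>
     (\<forall>x\<in>B. \<forall>y\<in>B. x \<noteq> y \<longrightarrow> lt x y \<or> lt y x)"

text \<open>Extension to B^n, most significant letter on the right (indices 0-based).\<close>

definition revlex_less :: "('b \<Rightarrow> 'b \<Rightarrow> bool) \<Rightarrow> 'b list \<Rightarrow> 'b list \<Rightarrow> bool" where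
  "revlex_less lt u v \<longleftrightarrow> length u = length v \<and>
     (\<exists>i<length u. lt (u ! i) (v ! i) \<and> (\<forall>j. i < j \<and> j < length u \<longrightarrow> u ! j = v ! j))"

definition words :: "'b set \<Rightarrow> nat \<Rightarrow> 'b list set" where
  "words B n = {w. length w = n \<and> set w \<subseteq> B}"

definition enum_words :: "'b set \<Rightarrow> ('b \<Rightarrow> 'b \<Rightarrow> bool) \<Rightarrow> nat \<Rightarrow> 'b list list" where
  "enum_words B lt n = (THE bs. sorted_wrt (revlex_less lt) bs \<and> set bs = words B n)"

definition tensor :: "('a, 'b) ltr list \<Rightarrow> 'b list \<Rightarrow> ('a, 'b) ltr list" where
  "tensor u b = map2 Ext u b"

definition ext_alph :: "('a, 'b) ltr set \<Rightarrow> 'b set \<Rightarrow> ('a, 'b) ltr set" where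
  "ext_alph Sig B = {Ext s b | s b. s \<in> Sig \<and> b \<in> B}"

definition maplex :: "('a, 'b) ltr set \<Rightarrow> 'b set \<Rightarrow> ('b \<Rightarrow> 'b \<Rightarrow> bool)
     \<Rightarrow> (('a, 'b) ltr list \<Rightarrow> 'g list option) \<Rightarrow> ('a, 'b) ltr list \<Rightarrow> 'g list option" where
  "maplex Sig B lt f u =
     (let rs = map (\<lambda>b. f (tensor u b)) (enum_words B lt (length u))
      in if u \<in> lists Sig \<and> None \<notin> set rs then Some (concat (map the rs)) else None)"

inductive lex :: "nat \<Rightarrow> ('a, 'b) ltr set \<Rightarrow> 'g set \<Rightarrow> (('a, 'b) ltr list \<Rightarrow> 'g list option) \<Rightarrow> bool" where
  lex0: "simple_trans Sig Gamma f \<Longrightarrow> lex 0 Sig Gamma f"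
| lexSuc: "finite B \<Longrightarrow> strict_linear_on B lt \<Longrightarrow> lex k (ext_alph Sig B) Gamma f
            \<Longrightarrow> lex (Suc k) Sig Gamma (maplex Sig B lt f)"

end

theory Submission
  imports Defs "HOL-Library.FuncSet"
begin

lemma sorted_wrt_unique:
  assumes "sorted_wrt R xs" "sorted_wrt R ys" "set xs = set ys"
    "\<forall>x\<in>set xs. \<forall>y\<in>set xs. R x y \<longrightarrow> \<not> R y x"
  shows "xs = ys"
  using assms
proof (induction xs arbitrary: ys)
  case Nil
  then show ?case by simp
next
  case (Cons x xs)
  obtain y ys' where ys: "ys = y # ys'" using Cons.prems(3) by (cases ys) auto
  have A: "\<And>a b. a \<in> set (x#xs) \<Longrightarrow> b \<in> set (x#xs) \<Longrightarrow> R a b \<Longrightarrow> \<not> R b a"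
    using Cons.prems(4) by blast
  have xy: "x = y"
  proof (rule ccontr)
    assume "x \<noteq> y"
    then have "y \<in> set xs" "x \<in> set ys'" using Cons.prems(3) ys by auto
    then have "R x y" "R y x" using Cons.prems(1,2) ys by auto
    then show False using A \<open>y \<in> set xs\<close> \<open>x \<in> set ys'\<close> Cons.prems(3) ys by (meson list.set_intros)
  qed
  have nx: "x \<notin> set xs"
  proof
    assume "x \<in> set xs" then have "R x x" using Cons.prems(1) by simp
    then show False using A by (meson list.set_intros)
  qed
  have ny: "y \<notin> set ys'"
  proof
    assume "y \<in> set ys'" then have "R y y" using Cons.prems(2) ys by simp
    then show False using A xy by (meson list.set_intros)
  qed
  have "set xs = set ys'" using Cons.prems(3) ys xy nx ny by auto
  moreover have "sorted_wrt R xs" "sorted_wrt R ys'" using Cons.prems(1,2) ys by auto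
  moreover have "\<forall>a\<in>set xs. \<forall>b\<in>set xs. R a b \<longrightarrow> \<not> R b a" using A by (meson list.set_intros(2))
  ultimately have "xs = ys'" using Cons.IH by blast
  then show ?case using ys xy by simp
qed

lemma exists_sorted:
  assumes "finite S" "strict_linear_on B lt" "S \<subseteq> B"
  shows "\<exists>xs. sorted_wrt lt xs \<and> set xs = S"
  using assms
proof (induction S rule: finite_induct)
  case empty
  then show ?case by auto
next
  case (insert x F)
  then obtain xs where xs: "sorted_wrt lt xs" "set xs = F" by auto
  let ?ys = "filter (\<lambda>y. lt y x) xs @ [x] @ filter (\<lambda>y. lt x y) xs"
  have L3: "\<forall>x\<in>B. \<forall>y\<in>B. x \<noteq> y \<longrightarrow> lt x y \<or> lt y x"
   and L2: "\<forall>x\<in>B. \<forall>y\<in>B. \<forall>z\<in>B. lt x y \<longrightarrow> lt y z \<longrightarrow> lt x z"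
    using insert.prems(1) unfolding strict_linear_on_def by blast+
  have lin: "\<forall>y\<in>F. lt y x \<or> lt x y"
  proof
    fix y assume "y \<in> F"
    then have "y \<noteq> x" "y \<in> B" "x \<in> B" using insert.hyps(2) insert.prems(2) by auto
    then show "lt y x \<or> lt x y" using L3 by blast
  qed
  have tr: "\<forall>y\<in>B. \<forall>z\<in>B. lt y x \<longrightarrow> lt x z \<longrightarrow> lt y z"
    using L2 insert.prems(2) by blast
  have s1: "sorted_wrt lt (filter (\<lambda>y. lt y x) xs)" "sorted_wrt lt (filter (\<lambda>y. lt x y) xs)"
    using xs(1) by (simp_all add: sorted_wrt_filter)
  have xB: "x \<in> B" and FB: "F \<subseteq> B" using insert.prems(2) by auto
  have "sorted_wrt lt ?ys"
    unfolding sorted_wrt_append using s1 tr xB FB xs(2) by auto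
  moreover have "set ?ys = insert x F" using lin xs(2) by auto
  ultimately show ?case by blast
qed

fun E :: "'b list \<Rightarrow> nat \<Rightarrow> 'b list list" where
  "E cs 0 = [[]]"
| "E cs (Suc n) = concat (map (\<lambda>c. map (\<lambda>b. b @ [c]) (E cs n)) cs)"

lemma set_E: "set (E cs n) = words (set cs) n"
proof (induction n)
  case 0
  then show ?case by (auto simp: words_def)
next
  case (Suc n)
  show ?case
  proof
    show "set (E cs (Suc n)) \<subseteq> words (set cs) (Suc n)"
      using Suc by (auto simp: words_def)
    show "words (set cs) (Suc n) \<subseteq> set (E cs (Suc n))"
    proof
      fix w assume w: "w \<in> words (set cs) (Suc n)"
      then have "w \<noteq> []" by (auto simp: words_def)
      then have weq: "w = butlast w @ [last w]" by simp
      have "butlast w \<in> words (set cs) n" using w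
        by (auto simp: words_def dest: in_set_butlastD)
      moreover have "last w \<in> set cs" using w \<open>w \<noteq> []\<close> by (auto simp: words_def)
      ultimately show "w \<in> set (E cs (Suc n))" using Suc weq
        by simp (metis image_eqI)
    qed
  qed
qed

lemma length_E: "b \<in> set (E cs n) \<Longrightarrow> length b = n"
  using set_E[of cs n] by (auto simp: words_def)

lemma revlex_snoc_same:
  assumes "length b = length b'" "\<not> lt c c"
  shows "revlex_less lt (b @ [c]) (b' @ [c]) \<longleftrightarrow> revlex_less lt b b'"
proof
  assume h: "revlex_less lt (b @ [c]) (b' @ [c])"
  then obtain i where i: "i < Suc (length b)" "lt ((b @ [c]) ! i) ((b' @ [c]) ! i)"
    "\<forall>j. i < j \<and> j < Suc (length b) \<longrightarrow> (b @ [c]) ! j = (b' @ [c]) ! j"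
    unfolding revlex_less_def by auto
  have "i \<noteq> length b" using i(2) assms by (auto simp: nth_append)
  then have "i < length b" using i(1) by simp
  then show "revlex_less lt b b'" unfolding revlex_less_def using i assms
    by (auto simp: nth_append) (metis less_Suc_eq)
next
  assume "revlex_less lt b b'"
  then obtain i where i: "i < length b" "lt (b ! i) (b' ! i)"
    "\<forall>j. i < j \<and> j < length b \<longrightarrow> b ! j = b' ! j"
    unfolding revlex_less_def by auto
  show "revlex_less lt (b @ [c]) (b' @ [c])" unfolding revlex_less_def
    using i assms by (intro conjI exI[of _ i]) (auto simp: nth_append)
qed

lemma revlex_snoc_diff:
  assumes "length b = length b'" "lt c c'"
  shows "revlex_less lt (b @ [c]) (b' @ [c'])"
  unfolding revlex_less_def using assms
  by (intro conjI exI[of _ "length b"]) (auto simp: nth_append)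

lemma sorted_E:
  assumes "sorted_wrt lt cs" "\<forall>c\<in>set cs. \<not> lt c c"
  shows "sorted_wrt (revlex_less lt) (E cs n)"
proof (induction n)
  case 0
  then show ?case by simp
next
  case (Suc n)
  have blk: "sorted_wrt (revlex_less lt) (map (\<lambda>b. b @ [c]) (E cs n))" if "c \<in> set cs" for c
    unfolding sorted_wrt_map
    apply (rule sorted_wrt_mono_rel[OF _ Suc])
    using that assms(2) by (auto simp: revlex_snoc_same length_E)
  have "sorted_wrt (revlex_less lt) (concat (map (\<lambda>c. map (\<lambda>b. b @ [c]) (E cs n)) ds))"
    if "sorted_wrt lt ds" "set ds \<subseteq> set cs" for ds
    using that
  proof (induction ds)
    case Nil
    then show ?case by simp
  next
    case (Cons d ds)
    then show ?case using blk
      by (auto simp: sorted_wrt_append length_E intro!: revlex_snoc_diff)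
  qed
  then show ?case using assms by simp
qed

lemma revlex_asym:
  assumes "strict_linear_on B lt" "u \<in> words B n" "v \<in> words B n" "revlex_less lt u v"
  shows "\<not> revlex_less lt v u"
proof
  assume "revlex_less lt v u"
  then obtain j where j: "j < length v" "lt (v ! j) (u ! j)"
    "\<forall>k. j < k \<and> k < length v \<longrightarrow> v ! k = u ! k"
    unfolding revlex_less_def by auto
  obtain i where i: "i < length u" "lt (u ! i) (v ! i)"
    "\<forall>k. i < k \<and> k < length u \<longrightarrow> u ! k = v ! k"
    using assms(4) unfolding revlex_less_def by auto
  have len: "length u = n" "length v = n" "set u \<subseteq> B" "set v \<subseteq> B"
    using assms(2,3) by (auto simp: words_def)
  have inB: "u ! k \<in> B" "v ! k \<in> B" if "k < n" for k using len that by auto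
  have irr: "\<forall>x\<in>B. \<not> lt x x" and trn: "\<forall>x\<in>B. \<forall>y\<in>B. \<forall>z\<in>B. lt x y \<longrightarrow> lt y z \<longrightarrow> lt x z"
    using assms(1) unfolding strict_linear_on_def by blast+
  consider "i < j" | "j < i" | "i = j" by linarith
  then show False
  proof cases
    case 1
    then have "u ! j = v ! j" using i(3) j(1) len by simp
    then show ?thesis using j(1,2) irr inB len by simp
  next
    case 2
    then have "v ! i = u ! i" using j(3) i(1) len by simp
    then show ?thesis using i(1,2) irr inB len by simp
  next
    case 3
    then have "lt (u ! i) (u ! i)" using i j trn inB len by blast
    then show ?thesis using i(1) irr inB len by simp
  qed
qed

lemma enum_words_E:
  assumes "strict_linear_on B lt" "sorted_wrt lt cs" "set cs = B"
  shows "enum_words B lt n = E cs n"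
  unfolding enum_words_def
proof (rule the_equality)
  have irr: "\<forall>c\<in>set cs. \<not> lt c c" using assms unfolding strict_linear_on_def by auto
  show "sorted_wrt (revlex_less lt) (E cs n) \<and> set (E cs n) = words B n"
    using sorted_E[OF assms(2) irr] set_E assms(3) by auto
  fix bs assume bs: "sorted_wrt (revlex_less lt) bs \<and> set bs = words B n"
  show "bs = E cs n"
  proof (rule sorted_wrt_unique)
    show "sorted_wrt (revlex_less lt) bs" using bs by simp
    show "sorted_wrt (revlex_less lt) (E cs n)" using sorted_E[OF assms(2) irr] .
    show "set bs = set (E cs n)" using bs set_E[of cs n] assms(3) by simp
    show "\<forall>x\<in>set bs. \<forall>y\<in>set bs. revlex_less lt x y \<longrightarrow> \<not> revlex_less lt y x"
      using bs revlex_asym[OF assms(1)] by blast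
  qed
qed

lemma enum_words_set:
  assumes "finite B" "strict_linear_on B lt"
  shows "set (enum_words B lt n) = words B n"
proof -
  obtain cs where "sorted_wrt lt cs" "set cs = B" using exists_sorted[OF assms(1,2)] by auto
  then show ?thesis using enum_words_E[OF assms(2)] set_E by metis
qed

definition mop :: "(nat \<Rightarrow> nat) option \<Rightarrow> (nat \<Rightarrow> nat) option \<Rightarrow> (nat \<Rightarrow> nat) option" where
  "mop a b = (case a of None \<Rightarrow> None | Some s \<Rightarrow> (case b of None \<Rightarrow> None | Some t \<Rightarrow> Some (t \<circ> s)))"

definition mprod :: "(nat \<Rightarrow> nat) option list \<Rightarrow> (nat \<Rightarrow> nat) option" where
  "mprod xs = foldr mop xs (Some id)"

lemma mop_assoc: "mop (mop a b) c = mop a (mop b c)"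
  by (auto simp: mop_def split: option.splits)

lemma mop_unit_l[simp]: "mop (Some id) a = a"
  by (auto simp: mop_def split: option.splits)

lemma mop_unit_r[simp]: "mop a (Some id) = a"
  by (auto simp: mop_def split: option.splits)

lemma mop_None[simp]: "mop None a = None" "mop a None = None"
  by (auto simp: mop_def split: option.splits)

lemma mop_Some[simp]: "mop (Some s) (Some t) = Some (t \<circ> s)"
  by (simp add: mop_def)

lemma mprod_Nil[simp]: "mprod [] = Some id"
  by (simp add: mprod_def)

lemma mprod_Cons[simp]: "mprod (x # xs) = mop x (mprod xs)"
  by (simp add: mprod_def)

lemma foldr_mop: "foldr mop xs z = mop (mprod xs) z"
  by (induction xs) (auto simp: mop_assoc)

lemma mprod_append: "mprod (xs @ ys) = mop (mprod xs) (mprod ys)"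
  unfolding mprod_def foldr_append by (rule foldr_mop[unfolded mprod_def])

lemma mprod_concat: "mprod (concat xss) = mprod (map mprod xss)"
  by (induction xss) (auto simp: mprod_append)

lemma mprod_None: "None \<in> set xs \<Longrightarrow> mprod xs = None"
  by (induction xs) auto

lemma mprod_single[simp]: "mprod [x] = x"
  by simp

lemma mprod_closed:
  assumes "\<forall>a\<in>M. \<forall>b\<in>M. mop a b \<in> M" "Some id \<in> M" "set xs \<subseteq> M"
  shows "mprod xs \<in> M"
  using assms(3) by (induction xs) (auto simp: assms(1,2))

definition recog :: "'c set \<Rightarrow> ('c list \<Rightarrow> 'm) \<Rightarrow> 'm set \<Rightarrow> bool" where
  "recog Sig g Ms \<longleftrightarrow> (\<exists>(Q :: nat set) q0 \<delta> out. finite Q \<and> q0 \<in> Q \<and>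
     (\<forall>q\<in>Q. \<forall>a\<in>Sig. \<delta> q a \<in> Q) \<and> (\<forall>q\<in>Q. out q \<in> Ms) \<and>
     (\<forall>u\<in>lists Sig. g u = out (fold (\<lambda>a q. \<delta> q a) u q0)))"

lemma fold_in:
  assumes "\<forall>q\<in>Q. \<forall>a\<in>Sig. \<delta> q a \<in> Q" "q \<in> Q" "u \<in> lists Sig"
  shows "fold (\<lambda>a q. \<delta> q a) u q \<in> Q"
  using assms(2,3) by (induction u arbitrary: q) (auto simp: assms(1))

lemma recog_gen:
  fixes Q :: "'s set"
  assumes "finite Q" "q0 \<in> Q" "\<forall>q\<in>Q. \<forall>a\<in>Sig. \<delta> q a \<in> Q" "\<forall>q\<in>Q. out q \<in> Ms"
    "\<forall>u\<in>lists Sig. g u = out (fold (\<lambda>a q. \<delta> q a) u q0)"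
  shows "recog Sig g Ms"
proof -
  obtain e :: "'s \<Rightarrow> nat" where e: "inj_on e Q"
    using finite_imp_inj_to_nat_seg[OF assms(1)] by blast
  define d where "d = inv_into Q e"
  have de: "d (e q) = q" if "q \<in> Q" for q using e that by (simp add: d_def)
  define \<delta>' where "\<delta>' n a = e (\<delta> (d n) a)" for n a
  define out' where "out' n = out (d n)" for n
  have run: "fold (\<lambda>a q. \<delta>' q a) u (e q) = e (fold (\<lambda>a q. \<delta> q a) u q)"
    if "q \<in> Q" "u \<in> lists Sig" for u q
    using that
  proof (induction u arbitrary: q)
    case Nil then show ?case by simp
  next
    case (Cons a u)
    then have "\<delta> q a \<in> Q" using assms(3) by auto
    then show ?case using Cons by (simp add: \<delta>'_def de)
  qed
  show ?thesis unfolding recog_def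
  proof (intro exI conjI ballI)
    show "finite (e ` Q)" using assms(1) by simp
    show "e q0 \<in> e ` Q" using assms(2) by simp
    show "\<delta>' q a \<in> e ` Q" if "q \<in> e ` Q" "a \<in> Sig" for q a
      using that assms(3) de by (auto simp: \<delta>'_def)
    show "out' q \<in> Ms" if "q \<in> e ` Q" for q
      using that assms(4) de by (auto simp: out'_def)
    show "g u = out' (fold (\<lambda>a q. \<delta>' q a) u (e q0))" if "u \<in> lists Sig" for u
      using that assms(2,5) run[OF assms(2) that] fold_in[OF assms(3,2) that]
      by (simp add: out'_def de)
  qed
qed

lemma recog_cong:
  assumes "recog Sig g Ms" "\<forall>u\<in>lists Sig. g u = h u"
  shows "recog Sig h Ms"
proof -
  obtain Q q0 \<delta> out where r: "finite (Q :: nat set)" "q0 \<in> Q" "\<forall>q\<in>Q. \<forall>a\<in>Sig. \<delta> q a \<in> Q"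
    "\<forall>q\<in>Q. out q \<in> Ms" "\<forall>u\<in>lists Sig. g u = out (fold (\<lambda>a q. \<delta> q a) u q0)"
    using assms(1) unfolding recog_def by blast
  have "\<forall>u\<in>lists Sig. h u = out (fold (\<lambda>a q. \<delta> q a) u q0)"
    using r(5) assms(2) by simp
  then show ?thesis unfolding recog_def using r(1-4) by blast
qed

lemma recog_regular:
  assumes "finite Sig" "recog Sig g Ms"
  shows "regular Sig {u \<in> lists Sig. P (g u)}"
proof -
  obtain Q q0 \<delta> out where r: "finite (Q :: nat set)" "q0 \<in> Q" "\<forall>q\<in>Q. \<forall>a\<in>Sig. \<delta> q a \<in> Q"
    "\<forall>u\<in>lists Sig. g u = out (fold (\<lambda>a q. \<delta> q a) u q0)"
    using assms(2) unfolding recog_def by blast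
  show ?thesis unfolding regular_def
  proof (intro conjI exI)
    show "{u \<in> lists Sig. P (g u)} =
      {w \<in> lists Sig. fold (\<lambda>a q. \<delta> q a) w q0 \<in> {q \<in> Q. P (out q)}}"
    proof (rule Collect_cong)
      fix u
      show "(u \<in> lists Sig \<and> P (g u)) =
        (u \<in> lists Sig \<and> fold (\<lambda>a q. \<delta> q a) u q0 \<in> {q \<in> Q. P (out q)})"
      proof (cases "u \<in> lists Sig")
        case True
        then show ?thesis using r(4) fold_in[OF r(3) r(2) True] by simp
      qed simp
    qed
  qed (use assms r in auto)
qed

lemma tensor_lists:
  assumes "u \<in> lists Sig" "set b \<subseteq> B"
  shows "tensor u b \<in> lists (ext_alph Sig B)"
unfolding in_lists_conv_set
proof
  fix x assume "x \<in> set (tensor u b)"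
  then obtain s c where "(s, c) \<in> set (zip u b)" "x = Ext s c"
    unfolding tensor_def by auto
  then have "s \<in> set u" "c \<in> set b" "x = Ext s c"
    by (auto dest: set_zip_leftD set_zip_rightD)
  then show "x \<in> ext_alph Sig B" using assms unfolding ext_alph_def by auto
qed

lemma tensor_snoc:
  "length b = length u \<Longrightarrow> tensor (u @ [a]) (b @ [c]) = tensor u b @ [Ext a c]"
  by (simp add: tensor_def)

lemma finite_ext_alph: "finite Sig \<Longrightarrow> finite B \<Longrightarrow> finite (ext_alph Sig B)"
proof -
  assume "finite Sig" "finite B"
  moreover have "ext_alph Sig B = (\<lambda>(s, b). Ext s b) ` (Sig \<times> B)"
    unfolding ext_alph_def by auto
  ultimately show ?thesis by simp
qed

lemma step:
  fixes Sig :: "('a, 'b) ltr set" and g :: "('a, 'b) ltr list \<Rightarrow> (nat \<Rightarrow> nat) option"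
  assumes finB: "finite B" and slo: "strict_linear_on B lt"
    and Mfin: "finite M" and Mop: "\<forall>a\<in>M. \<forall>b\<in>M. mop a b \<in> M" and Mid: "Some id \<in> M"
    and rg: "recog (ext_alph Sig B) g M"
  shows "recog Sig (\<lambda>u. mprod (map (\<lambda>b. g (tensor u b)) (enum_words B lt (length u)))) M"
proof -
  obtain Q q0 \<delta> out where r: "finite (Q :: nat set)" "q0 \<in> Q"
    "\<forall>q\<in>Q. \<forall>a\<in>ext_alph Sig B. \<delta> q a \<in> Q" "\<forall>q\<in>Q. out q \<in> M"
    "\<forall>u\<in>lists (ext_alph Sig B). g u = out (fold (\<lambda>a q. \<delta> q a) u q0)"
    using rg unfolding recog_def by blast
  obtain cs where cs: "sorted_wrt lt cs" "set cs = B"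
    using exists_sorted[OF finB slo] by blast
  have En: "enum_words B lt n = E cs n" for n using enum_words_E[OF slo cs] .
  define run where "run q w = fold (\<lambda>a q. \<delta> q a) w q" for q w
  define P where "P u \<phi> q = mprod (map (\<lambda>b. \<phi> (run q (tensor u b))) (E cs (length u)))"
    for u \<phi> q
  define \<Phi> where "\<Phi> = Q \<rightarrow>\<^sub>E M"
  define SS where "SS = \<Phi> \<rightarrow>\<^sub>E \<Phi>"
  define St where "St u = (\<lambda>\<phi>\<in>\<Phi>. \<lambda>q\<in>Q. P u \<phi> q)" for u
  define \<Delta> where "\<Delta> S a = (\<lambda>\<phi>\<in>\<Phi>. \<lambda>q\<in>Q.
      mprod (map (\<lambda>c. S (\<lambda>p\<in>Q. \<phi> (\<delta> p (Ext a c))) q) cs))" for S a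
  define out' where "out' (S :: (nat \<Rightarrow> (nat \<Rightarrow> nat) option) \<Rightarrow> nat \<Rightarrow> (nat \<Rightarrow> nat) option) = S (restrict out Q) q0" for S

  have tens: "tensor u b \<in> lists (ext_alph Sig B)"
    if "u \<in> lists Sig" "b \<in> set (E cs (length u))" for u b
    using that set_E[of cs "length u"] cs(2) by (intro tensor_lists) (auto simp: words_def)
  have runin: "run q w \<in> Q" if "q \<in> Q" "w \<in> lists (ext_alph Sig B)" for q w
    unfolding run_def using fold_in[OF r(3) that] .
  have Prec: "P (u @ [a]) \<phi> q = mprod (map (\<lambda>c. P u (\<lambda>p. \<phi> (\<delta> p (Ext a c))) q) cs)"
    for u a \<phi> q
  proof -
    have "P (u @ [a]) \<phi> q = mprod (map (\<lambda>b. \<phi> (run q (tensor (u @ [a]) b)))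
        (concat (map (\<lambda>c. map (\<lambda>b. b @ [c]) (E cs (length u))) cs)))"
      by (simp add: P_def)
    also have "\<dots> = mprod (map (\<lambda>c. mprod (map (\<lambda>b. \<phi> (run q (tensor (u @ [a]) (b @ [c]))))
        (E cs (length u)))) cs)"
      by (simp add: map_concat mprod_concat comp_def)
    also have "\<dots> = mprod (map (\<lambda>c. P u (\<lambda>p. \<phi> (\<delta> p (Ext a c))) q) cs)"
      unfolding P_def
      by (intro arg_cong[where f=mprod] map_cong refl)
        (simp add: tensor_snoc length_E run_def)
    finally show ?thesis .
  qed
  have Pcong: "P u \<phi> q = P u \<psi> q"
    if "u \<in> lists Sig" "q \<in> Q" "\<forall>p\<in>Q. \<phi> p = \<psi> p" for u \<phi> \<psi> q
    unfolding P_def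
    by (intro arg_cong[where f=mprod] map_cong refl) (use that tens runin in auto)
  have PM: "P u \<phi> q \<in> M"
    if "u \<in> lists Sig" "q \<in> Q" "\<forall>p\<in>Q. \<phi> p \<in> M" for u \<phi> q
    unfolding P_def
  proof (rule mprod_closed[OF Mop Mid])
    have "\<forall>b\<in>set (E cs (length u)). \<phi> (run q (tensor u b)) \<in> M"
      using that tens runin by blast
    then show "set (map (\<lambda>b. \<phi> (run q (tensor u b))) (E cs (length u))) \<subseteq> M" by auto
  qed
  have phic: "(\<lambda>p\<in>Q. \<phi> (\<delta> p (Ext a c))) \<in> \<Phi>"
    if "\<phi> \<in> \<Phi>" "a \<in> Sig" "c \<in> B" for \<phi> a c
  proof -
    have "Ext a c \<in> ext_alph Sig B" using that unfolding ext_alph_def by auto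
    then have "\<forall>p\<in>Q. \<delta> p (Ext a c) \<in> Q" using r(3) by blast
    then show ?thesis using that(1) unfolding \<Phi>_def by (auto simp: restrict_PiE_iff PiE_mem)
  qed
  have Stin: "St u \<in> SS" if "u \<in> lists Sig" for u
    unfolding St_def SS_def restrict_PiE_iff
  proof
    fix \<phi> assume "\<phi> \<in> \<Phi>"
    then have "\<forall>p\<in>Q. \<phi> p \<in> M" unfolding \<Phi>_def by (auto simp: PiE_mem)
    then show "(\<lambda>q\<in>Q. P u \<phi> q) \<in> \<Phi>" unfolding \<Phi>_def restrict_PiE_iff
      using PM[OF that] by blast
  qed
  have \<Delta>in: "\<Delta> S a \<in> SS" if "S \<in> SS" "a \<in> Sig" for S a
    unfolding \<Delta>_def SS_def restrict_PiE_iff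
  proof
    fix \<phi> assume \<phi>: "\<phi> \<in> \<Phi>"
    have "mprod (map (\<lambda>c. S (\<lambda>p\<in>Q. \<phi> (\<delta> p (Ext a c))) q) cs) \<in> M" if "q \<in> Q" for q
    proof (rule mprod_closed[OF Mop Mid])
      show "set (map (\<lambda>c. S (\<lambda>p\<in>Q. \<phi> (\<delta> p (Ext a c))) q) cs) \<subseteq> M"
      proof
        fix x assume "x \<in> set (map (\<lambda>c. S (\<lambda>p\<in>Q. \<phi> (\<delta> p (Ext a c))) q) cs)"
        then obtain c where c: "c \<in> B" "x = S (\<lambda>p\<in>Q. \<phi> (\<delta> p (Ext a c))) q"
          using cs(2) by auto
        have "S (\<lambda>p\<in>Q. \<phi> (\<delta> p (Ext a c))) \<in> \<Phi>"
          using PiE_mem[OF \<open>S \<in> SS\<close>[unfolded SS_def] phic[OF \<phi> \<open>a \<in> Sig\<close> c(1)]] .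
        then show "x \<in> M" using c(2) \<open>q \<in> Q\<close> unfolding \<Phi>_def by (metis PiE_mem)
      qed
    qed
    then show "(\<lambda>q\<in>Q. mprod (map (\<lambda>c. S (\<lambda>p\<in>Q. \<phi> (\<delta> p (Ext a c))) q) cs)) \<in> \<Phi>"
      unfolding \<Phi>_def restrict_PiE_iff by blast
  qed
  have \<Delta>St: "\<Delta> (St u) a = St (u @ [a])" if "u \<in> lists Sig" "a \<in> Sig" for u a
    unfolding \<Delta>_def St_def
  proof (intro restrict_ext)
    fix \<phi> q assume \<phi>: "\<phi> \<in> \<Phi>" and q: "q \<in> Q"
    have "(\<lambda>\<phi>\<in>\<Phi>. \<lambda>q\<in>Q. P u \<phi> q) (\<lambda>p\<in>Q. \<phi> (\<delta> p (Ext a c))) q =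
          P u (\<lambda>p. \<phi> (\<delta> p (Ext a c))) q" if "c \<in> set cs" for c
    proof -
      have "(\<lambda>p\<in>Q. \<phi> (\<delta> p (Ext a c))) \<in> \<Phi>" using phic \<phi> \<open>a \<in> Sig\<close> that cs(2) by blast
      then have "(\<lambda>\<phi>\<in>\<Phi>. \<lambda>q\<in>Q. P u \<phi> q) (\<lambda>p\<in>Q. \<phi> (\<delta> p (Ext a c))) q =
          P u (\<lambda>p\<in>Q. \<phi> (\<delta> p (Ext a c))) q" using q by simp
      also have "\<dots> = P u (\<lambda>p. \<phi> (\<delta> p (Ext a c))) q"
        by (rule Pcong[OF \<open>u \<in> lists Sig\<close> q]) simp
      finally show ?thesis .
    qed
    then have "mprod (map (\<lambda>c. (\<lambda>\<phi>\<in>\<Phi>. \<lambda>q\<in>Q. P u \<phi> q) (\<lambda>p\<in>Q. \<phi> (\<delta> p (Ext a c))) q) cs)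
        = mprod (map (\<lambda>c. P u (\<lambda>p. \<phi> (\<delta> p (Ext a c))) q) cs)"
      by (intro arg_cong[where f=mprod] map_cong refl) simp
    also have "\<dots> = P (u @ [a]) \<phi> q" by (rule Prec[symmetric])
    finally show "mprod (map (\<lambda>c. (\<lambda>\<phi>\<in>\<Phi>. \<lambda>q\<in>Q. P u \<phi> q) (\<lambda>p\<in>Q. \<phi> (\<delta> p (Ext a c))) q) cs)
        = P (u @ [a]) \<phi> q" .
  qed
  have runSt: "fold (\<lambda>a S. \<Delta> S a) u (St []) = St u" if "u \<in> lists Sig" for u
    using that
  proof (induction u rule: rev_induct)
    case Nil then show ?case by simp
  next
    case (snoc a u)
    then show ?case using \<Delta>St[of u a] by simp
  qed
  have outSt: "out' (St u) = mprod (map (\<lambda>b. g (tensor u b)) (enum_words B lt (length u)))"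
    if "u \<in> lists Sig" for u
  proof -
    have ro: "restrict out Q \<in> \<Phi>" unfolding \<Phi>_def using r(4) by (simp add: restrict_PiE_iff)
    have "out' (St u) = P u (restrict out Q) q0" unfolding out'_def St_def using ro r(2) by simp
    also have "\<dots> = P u out q0" by (rule Pcong[OF that r(2)]) simp
    also have "\<dots> = mprod (map (\<lambda>b. g (tensor u b)) (enum_words B lt (length u)))"
      unfolding P_def En
      by (intro arg_cong[where f=mprod] map_cong refl) (use r(5) tens[OF that] in \<open>simp add: run_def\<close>)
    finally show ?thesis .
  qed
  show ?thesis
  proof (rule recog_gen[of SS "St []" Sig \<Delta> out'])
    show "finite SS" unfolding SS_def \<Phi>_def using r(1) Mfin
      by (intro finite_PiE) auto
    show "St [] \<in> SS" using Stin by simp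
    show "\<forall>q\<in>SS. \<forall>a\<in>Sig. \<Delta> q a \<in> SS" using \<Delta>in by blast
    show "\<forall>q\<in>SS. out' q \<in> M"
    proof
      fix S assume "S \<in> SS"
      have ro: "restrict out Q \<in> \<Phi>" unfolding \<Phi>_def using r(4) by (simp add: restrict_PiE_iff)
      have "S (restrict out Q) \<in> \<Phi>" using PiE_mem[OF \<open>S \<in> SS\<close>[unfolded SS_def] ro] .
      then show "out' S \<in> M" unfolding out'_def \<Phi>_def using r(2) by (metis PiE_mem)
    qed
    show "\<forall>u\<in>lists Sig. mprod (map (\<lambda>b. g (tensor u b)) (enum_words B lt (length u))) =
        out' (fold (\<lambda>a q. \<Delta> q a) u (St []))"
      using runSt outSt by simp
  qed
qed

definition tau :: "nat set \<Rightarrow> (nat \<Rightarrow> 'g \<Rightarrow> nat) \<Rightarrow> 'g list \<Rightarrow> nat \<Rightarrow> nat" where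
  "tau QL dL v = (\<lambda>q. if q \<in> QL then fold (\<lambda>a q. dL q a) v q else q)"

definition TS :: "nat set \<Rightarrow> (nat \<Rightarrow> nat) set" where
  "TS QL = {t. \<forall>q. (q \<in> QL \<longrightarrow> t q \<in> QL) \<and> (q \<notin> QL \<longrightarrow> t q = q)}"

definition MS :: "nat set \<Rightarrow> (nat \<Rightarrow> nat) option set" where
  "MS QL = insert None (Some ` TS QL)"

lemma tau_Nil[simp]: "tau QL dL [] = id"
  by (auto simp: tau_def)

lemma tau_TS:
  assumes "\<forall>q\<in>QL. \<forall>a\<in>Gamma. dL q a \<in> QL" "v \<in> lists Gamma"
  shows "tau QL dL v \<in> TS QL"
  unfolding TS_def tau_def using fold_in[OF assms(1) _ assms(2)] by auto

lemma tau_append: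
  assumes "\<forall>q\<in>QL. \<forall>a\<in>Gamma. dL q a \<in> QL" "v \<in> lists Gamma"
  shows "tau QL dL (v @ w) = tau QL dL w \<circ> tau QL dL v"
proof
  fix q
  show "tau QL dL (v @ w) q = (tau QL dL w \<circ> tau QL dL v) q"
  proof (cases "q \<in> QL")
    case True
    have "fold (\<lambda>a q. dL q a) v q \<in> QL" by (rule fold_in[OF assms(1) True assms(2)])
    then show ?thesis using True by (simp add: tau_def)
  next
    case False
    then show ?thesis by (simp add: tau_def)
  qed
qed

lemma MS_fin:
  assumes "finite QL"
  shows "finite (MS QL)"
proof -
  have "TS QL \<subseteq> (\<lambda>r q. if q \<in> QL then r q else q) ` (QL \<rightarrow>\<^sub>E QL)"
  proof
    fix t assume t: "t \<in> TS QL"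
    have "restrict t QL \<in> QL \<rightarrow>\<^sub>E QL" using t by (auto simp: TS_def restrict_PiE_iff)
    moreover have "t = (\<lambda>q. if q \<in> QL then restrict t QL q else q)"
      using t by (auto simp: TS_def)
    ultimately show "t \<in> (\<lambda>r q. if q \<in> QL then r q else q) ` (QL \<rightarrow>\<^sub>E QL)" by blast
  qed
  moreover have "finite (QL \<rightarrow>\<^sub>E QL)" using assms by (intro finite_PiE) auto
  ultimately have "finite (TS QL)" by (meson finite_imageI finite_subset)
  then show ?thesis by (simp add: MS_def)
qed

lemma MS_op: "\<forall>a\<in>MS QL. \<forall>b\<in>MS QL. mop a b \<in> MS QL"
  by (auto simp: MS_def TS_def)

lemma MS_id: "Some id \<in> MS QL"
  unfolding MS_def TS_def by (intro insertI2 imageI) simp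

lemma lift_concat:
  assumes "\<forall>q\<in>QL. \<forall>a\<in>Gamma. dL q a \<in> QL" "set vs \<subseteq> lists Gamma"
  shows "mprod (map (\<lambda>v. Some (tau QL dL v)) vs) = Some (tau QL dL (concat vs))"
  using assms(2)
proof (induction vs)
  case Nil then show ?case by (simp add: id_def)
next
  case (Cons v vs)
  then have "v \<in> lists Gamma" by simp
  then show ?case using Cons tau_append[OF assms(1) \<open>v \<in> lists Gamma\<close>] by (simp add: comp_def)
qed

lemma base:
  fixes Sig :: "'c set" and Gamma :: "'g set" and f :: "'c list \<Rightarrow> 'g list option"
    and dL :: "nat \<Rightarrow> 'g \<Rightarrow> nat"
  assumes cl: "\<forall>q\<in>QL. \<forall>a\<in>Gamma. dL q a \<in> QL" and st: "simple_trans Sig Gamma f"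
  shows "(\<forall>u v. f u = Some v \<longrightarrow> u \<in> lists Sig \<and> v \<in> lists Gamma) \<and>
         recog Sig (\<lambda>u. map_option (tau QL dL) (f u)) (MS QL)"
proof -
  obtain n :: nat and Ls :: "nat \<Rightarrow> 'c list set" and ws :: "nat \<Rightarrow> 'g list" where
    h: "(\<forall>i<n. regular Sig (Ls i) \<and> length (ws i) \<le> 1 \<and> set (ws i) \<subseteq> Gamma) \<and>
    (\<forall>i<n. \<forall>j<n. i \<noteq> j \<longrightarrow> Ls i \<inter> Ls j = {}) \<and>
    (\<forall>u. (\<forall>i<n. u \<in> Ls i \<longrightarrow> f u = Some (ws i)) \<and> ((\<forall>i<n. u \<notin> Ls i) \<longrightarrow> f u = None))"
    using st[unfolded simple_trans_def] by (elim exE) (erule that)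
  have h1: "\<forall>i<n. regular Sig (Ls i) \<and> length (ws i) \<le> 1 \<and> set (ws i) \<subseteq> Gamma"
    using h by (rule conjunct1)
  have h2: "\<forall>i<n. \<forall>j<n. i \<noteq> j \<longrightarrow> Ls i \<inter> Ls j = {}"
    using h by (rule conjunct1[OF conjunct2])
  have h3: "\<forall>u. (\<forall>i<n. u \<in> Ls i \<longrightarrow> f u = Some (ws i)) \<and> ((\<forall>i<n. u \<notin> Ls i) \<longrightarrow> f u = None)"
    using h by (rule conjunct2[OF conjunct2])
  define R where "R i X = (case X of (Q :: nat set, q0, \<delta>, F) \<Rightarrow> finite Q \<and> q0 \<in> Q \<and> F \<subseteq> Q \<and>
      (\<forall>q\<in>Q. \<forall>a\<in>Sig. \<delta> q a \<in> Q) \<and> Ls i = {w \<in> lists Sig. fold (\<lambda>a q. \<delta> q a) w q0 \<in> F})"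
    for i X
  have exR: "\<exists>X. R i X" if "i < n" for i
  proof -
    have reg: "regular Sig (Ls i)" using h1 that by blast
    have "\<exists>(Q :: nat set) q0 \<delta> F. finite Q \<and> q0 \<in> Q \<and> F \<subseteq> Q \<and>
      (\<forall>q\<in>Q. \<forall>a\<in>Sig. \<delta> q a \<in> Q) \<and> Ls i = {w \<in> lists Sig. fold (\<lambda>a q. \<delta> q a) w q0 \<in> F}"
      using reg unfolding regular_def by (rule conjunct2[OF conjunct2])
    then obtain Q q0 \<delta> F where "finite (Q :: nat set) \<and> q0 \<in> Q \<and> F \<subseteq> Q \<and>
      (\<forall>q\<in>Q. \<forall>a\<in>Sig. \<delta> q a \<in> Q) \<and> Ls i = {w \<in> lists Sig. fold (\<lambda>a q. \<delta> q a) w q0 \<in> F}"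
      by blast
    then have "R i (Q, q0, \<delta>, F)" unfolding R_def by simp
    then show ?thesis by blast
  qed
  define G where "G i = (SOME X. R i X)" for i
  define Qf where "Qf i = fst (G i)" for i
  define q0f where "q0f i = fst (snd (G i))" for i
  define \<delta>f where "\<delta>f i = fst (snd (snd (G i)))" for i
  define Ff where "Ff i = snd (snd (snd (G i)))" for i
  have A: "finite (Qf i) \<and> q0f i \<in> Qf i \<and>
      (\<forall>q\<in>Qf i. \<forall>a\<in>Sig. \<delta>f i q a \<in> Qf i) \<and>
      Ls i = {w \<in> lists Sig. fold (\<lambda>a q. \<delta>f i q a) w (q0f i) \<in> Ff i}" if "i < n" for i
  proof -
    have "R i (G i)" unfolding G_def using exR[OF that] by (rule someI_ex)
    then show ?thesis unfolding Qf_def q0f_def \<delta>f_def Ff_def R_def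
      by (cases "G i") auto
  qed
  have wsG: "ws i \<in> lists Gamma" if "i < n" for i using h1 that by auto
  have LsSig: "Ls i \<subseteq> lists Sig" if "i < n" for i using A[OF that] by auto
  have dom: "\<forall>u v. f u = Some v \<longrightarrow> u \<in> lists Sig \<and> v \<in> lists Gamma"
  proof (intro allI impI)
    fix u v assume fu: "f u = Some v"
    then obtain i where i: "i < n" "u \<in> Ls i" using h3 by fastforce
    then have "v = ws i" using h3 fu by auto
    then show "u \<in> lists Sig \<and> v \<in> lists Gamma" using i wsG[OF i(1)] LsSig[OF i(1)] by blast
  qed
  define Q' where "Q' = (\<Pi>\<^sub>E i\<in>{..<n}. Qf i)"
  define s0 where "s0 = restrict q0f {..<n}"
  define \<delta>' where "\<delta>' s a = (\<lambda>i\<in>{..<n}. \<delta>f i (s i) a)" for s :: "nat \<Rightarrow> nat" and a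
  define out' where "out' s = (if \<exists>i<n. s i \<in> Ff i
      then Some (tau QL dL (ws (SOME i. i < n \<and> s i \<in> Ff i))) else None)" for s :: "nat \<Rightarrow> nat"
  have run: "fold (\<lambda>a s. \<delta>' s a) u (restrict p {..<n}) =
      (\<lambda>i\<in>{..<n}. fold (\<lambda>a q. \<delta>f i q a) u (p i))" for u p
  proof (induction u arbitrary: p)
    case Nil then show ?case by simp
  next
    case (Cons a u)
    have "\<delta>' (restrict p {..<n}) a = restrict (\<lambda>i. \<delta>f i (p i) a) {..<n}"
      unfolding \<delta>'_def by (intro restrict_ext) simp
    then have "fold (\<lambda>a s. \<delta>' s a) (a # u) (restrict p {..<n}) =
        fold (\<lambda>a s. \<delta>' s a) u (restrict (\<lambda>i. \<delta>f i (p i) a) {..<n})"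
      by (simp only: fold_simps)
    also have "\<dots> = (\<lambda>i\<in>{..<n}. fold (\<lambda>a q. \<delta>f i q a) u (\<delta>f i (p i) a))"
      by (rule Cons)
    finally show ?case by (simp only: fold_simps)
  qed
  have memb: "u \<in> Ls i \<longleftrightarrow> fold (\<lambda>a s. \<delta>' s a) u s0 i \<in> Ff i"
    if "u \<in> lists Sig" "i < n" for u i
    using A[OF that(2)] that run[of u q0f] unfolding s0_def by simp
  show ?thesis
  proof (rule conjI[OF dom], rule recog_gen[of Q' s0 Sig \<delta>' out'])
    show "finite Q'" unfolding Q'_def using A by (intro finite_PiE) auto
    show "s0 \<in> Q'" unfolding Q'_def s0_def using A by (simp add: restrict_PiE_iff)
    show "\<forall>q\<in>Q'. \<forall>a\<in>Sig. \<delta>' q a \<in> Q'"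
      unfolding Q'_def \<delta>'_def using A by (auto simp: restrict_PiE_iff PiE_mem)
    show "\<forall>q\<in>Q'. out' q \<in> MS QL"
    proof
      fix s assume "s \<in> Q'"
      show "out' s \<in> MS QL"
      proof (cases "\<exists>i<n. s i \<in> Ff i")
        case True
        then have "(SOME i. i < n \<and> s i \<in> Ff i) < n" by (metis (mono_tags, lifting) someI_ex)
        then have "tau QL dL (ws (SOME i. i < n \<and> s i \<in> Ff i)) \<in> TS QL"
          using tau_TS[OF cl wsG] by blast
        moreover have "out' s = Some (tau QL dL (ws (SOME i. i < n \<and> s i \<in> Ff i)))"
          unfolding out'_def by (rule if_P[OF True])
        ultimately show ?thesis unfolding MS_def by simp
      next
        case False
        have "out' s = None" unfolding out'_def by (rule if_not_P[OF False])
        then show ?thesis unfolding MS_def by simp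
      qed
    qed
    show "\<forall>u\<in>lists Sig. map_option (tau QL dL) (f u) = out' (fold (\<lambda>a q. \<delta>' q a) u s0)"
    proof
      fix u assume u: "u \<in> lists Sig"
      let ?R = "fold (\<lambda>a q. \<delta>' q a) u s0"
      show "map_option (tau QL dL) (f u) = out' ?R"
      proof (cases "\<exists>i<n. u \<in> Ls i")
        case True
        then obtain i where i: "i < n" "u \<in> Ls i" by blast
        have ex: "\<exists>i<n. ?R i \<in> Ff i" using i memb[OF u] by blast
        define j where "j = (SOME i. i < n \<and> ?R i \<in> Ff i)"
        have j: "j < n" "?R j \<in> Ff j" using someI_ex[OF ex[unfolded Bex_def[symmetric]]]
          unfolding j_def by (metis (mono_tags, lifting) ex someI_ex)+
        have "u \<in> Ls j" using memb[OF u j(1)] j(2) by simp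
        then have "j = i" using h2 i j(1) by blast
        have "out' ?R = Some (tau QL dL (ws j))" unfolding out'_def j_def by (rule if_P[OF ex])
        then have "out' ?R = Some (tau QL dL (ws i))" using \<open>j = i\<close> by simp
        moreover have "f u = Some (ws i)" using h3 i by blast
        ultimately show ?thesis by simp
      next
        case False
        then have "f u = None" using h3 by blast
        moreover have "\<not> (\<exists>i<n. ?R i \<in> Ff i)" using False memb[OF u] by blast
        then have "out' ?R = None" unfolding out'_def by (rule if_not_P)
        with \<open>f u = None\<close> show ?thesis by simp
      qed
    qed
  qed
qed

lemma map_the_Some: "None \<notin> set rs \<Longrightarrow> map (map_option g) rs = map (\<lambda>v. Some (g v)) (map the rs)"
proof (induction rs)
  case (Cons a rs)
  then obtain y where "a = Some y" by (cases a) auto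
  then show ?case using Cons by simp
qed simp

lemma inv:
  assumes cl: "\<forall>q\<in>QL. \<forall>a\<in>Gamma. dL q a \<in> QL" and finQ: "finite QL"
  shows "lex k Sig G f \<Longrightarrow> G = Gamma \<Longrightarrow> finite Sig \<Longrightarrow>
    (\<forall>u v. f u = Some v \<longrightarrow> u \<in> lists Sig \<and> v \<in> lists Gamma) \<and>
    recog Sig (\<lambda>u. map_option (tau QL dL) (f u)) (MS QL)"
proof (induction rule: lex.induct)
  case (lex0 Sig G f)
  then have "simple_trans Sig Gamma f" by simp
  then show ?case by (rule base[OF cl])
next
  case (lexSuc B lt k Sig G f)
  have fe: "finite (ext_alph Sig B)" using finite_ext_alph[OF lexSuc.prems(2) lexSuc.hyps(1)] .
  have IH: "\<forall>u v. f u = Some v \<longrightarrow> u \<in> lists (ext_alph Sig B) \<and> v \<in> lists Gamma"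
    "recog (ext_alph Sig B) (\<lambda>u. map_option (tau QL dL) (f u)) (MS QL)"
    using lexSuc.IH[OF lexSuc.prems(1) fe] by blast+
  let ?F = "maplex Sig B lt f"
  have dom: "\<forall>u v. ?F u = Some v \<longrightarrow> u \<in> lists Sig \<and> v \<in> lists Gamma"
  proof (intro allI impI)
    fix u v assume Fu: "?F u = Some v"
    let ?rs = "map (\<lambda>b. f (tensor u b)) (enum_words B lt (length u))"
    have c: "u \<in> lists Sig" "None \<notin> set ?rs" and v: "v = concat (map the ?rs)"
      using Fu unfolding maplex_def Let_def by (auto split: if_splits)
    have "\<forall>x\<in>set (map the ?rs). x \<in> lists Gamma"
    proof
      fix x assume "x \<in> set (map the ?rs)"
      then obtain r where r: "r \<in> set ?rs" "x = the r" by auto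
      have "r \<noteq> None" using c(2) r(1) by metis
      then obtain y where y: "r = Some y" by blast
      obtain b where rb: "r = f (tensor u b)" using r(1) by auto
      have "f (tensor u b) = Some y" using y rb by simp
      then have "y \<in> lists Gamma" using IH(1) by blast
      then show "x \<in> lists Gamma" using r(2) y by simp
    qed
    then have "v \<in> lists Gamma" unfolding v by (auto simp: in_lists_conv_set)
    then show "u \<in> lists Sig \<and> v \<in> lists Gamma" using c(1) by simp
  qed
  have rc: "recog Sig (\<lambda>u. mprod (map (\<lambda>b. map_option (tau QL dL) (f (tensor u b)))
      (enum_words B lt (length u)))) (MS QL)"
    by (rule step[OF lexSuc.hyps(1,2) MS_fin[OF finQ] MS_op MS_id IH(2)])
  have eq: "\<forall>u\<in>lists Sig. mprod (map (\<lambda>b. map_option (tau QL dL) (f (tensor u b)))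
      (enum_words B lt (length u))) = map_option (tau QL dL) (?F u)"
  proof
    fix u assume u: "u \<in> lists Sig"
    let ?rs = "map (\<lambda>b. f (tensor u b)) (enum_words B lt (length u))"
    have m: "map (\<lambda>b. map_option (tau QL dL) (f (tensor u b))) (enum_words B lt (length u))
        = map (map_option (tau QL dL)) ?rs" by simp
    show "mprod (map (\<lambda>b. map_option (tau QL dL) (f (tensor u b)))
      (enum_words B lt (length u))) = map_option (tau QL dL) (?F u)"
    proof (cases "None \<in> set ?rs")
      case True
      then have "map_option (tau QL dL) None \<in> set (map (map_option (tau QL dL)) ?rs)"
        unfolding set_map by (rule imageI)
      then have "None \<in> set (map (map_option (tau QL dL)) ?rs)" by (simp only: option.map(1))
      then have "mprod (map (map_option (tau QL dL)) ?rs) = None" by (rule mprod_None)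
      moreover have "\<not> (u \<in> lists Sig \<and> None \<notin> set ?rs)" using True by blast
      then have "?F u = None" unfolding maplex_def Let_def by (rule if_not_P)
      ultimately show ?thesis unfolding m by (simp only: option.map(1))
    next
      case False
      have F: "?F u = Some (concat (map the ?rs))"
      proof -
        have "u \<in> lists Sig \<and> None \<notin> set ?rs" using False u by blast
        then show ?thesis unfolding maplex_def Let_def by (rule if_P)
      qed
      have m2: "map (map_option (tau QL dL)) ?rs = map (\<lambda>v. Some (tau QL dL v)) (map the ?rs)"
        by (rule map_the_Some[OF False])
      have sub: "set (map the ?rs) \<subseteq> lists Gamma"
      proof
        fix x assume "x \<in> set (map the ?rs)"
        then obtain r where r: "r \<in> set ?rs" "x = the r" by auto
        then have "r \<noteq> None" using False by metis
        then obtain y where y: "r = Some y" by blast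
        obtain b where rb: "r = f (tensor u b)" using r(1) by auto
        have "f (tensor u b) = Some y" using y rb by simp
        then have "y \<in> lists Gamma" using IH(1) by blast
        then show "x \<in> lists Gamma" using r(2) y by simp
      qed
      show ?thesis unfolding m m2 F using lift_concat[OF cl sub] by (simp only: option.map(2))
    qed
  qed
  show ?case using dom recog_cong[OF rc eq] by blast
qed

theorem mainTheorem15:
  fixes Sig :: "('a, 'b) ltr set" and Gamma :: "'g set"
    and f :: "('a, 'b) ltr list \<Rightarrow> 'g list option" and k :: nat
  assumes "finite Sig" and "finite Gamma"
    and "lex k Sig Gamma f"
    and "regular Gamma L"
  shows "regular Sig {u. \<exists>v. f u = Some v \<and> v \<in> L}"
proof -
  obtain QL q0L dL FL where L: "finite (QL :: nat set)" "q0L \<in> QL" "FL \<subseteq> QL"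
    "\<forall>q\<in>QL. \<forall>a\<in>Gamma. dL q a \<in> QL"
    "L = {w \<in> lists Gamma. fold (\<lambda>a q. dL q a) w q0L \<in> FL}"
  proof -
    have "\<exists>(Q :: nat set) q0 \<delta> F. finite Q \<and> q0 \<in> Q \<and> F \<subseteq> Q \<and>
        (\<forall>q\<in>Q. \<forall>a\<in>Gamma. \<delta> q a \<in> Q) \<and> L = {w \<in> lists Gamma. fold (\<lambda>a q. \<delta> q a) w q0 \<in> F}"
      using assms(4) unfolding regular_def by (rule conjunct2[OF conjunct2])
    then show ?thesis using that by blast
  qed
  have I: "\<forall>u v. f u = Some v \<longrightarrow> u \<in> lists Sig \<and> v \<in> lists Gamma"
    "recog Sig (\<lambda>u. map_option (tau QL dL) (f u)) (MS QL)"
    using inv[OF L(4) L(1) assms(3) refl assms(1)] by blast+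
  define P where "P x = (case x of None \<Rightarrow> False | Some t \<Rightarrow> t q0L \<in> FL)"
    for x :: "(nat \<Rightarrow> nat) option"
  have "{u. \<exists>v. f u = Some v \<and> v \<in> L} = {u \<in> lists Sig. P (map_option (tau QL dL) (f u))}"
  proof (rule Collect_cong)
    fix u
    show "(\<exists>v. f u = Some v \<and> v \<in> L) = (u \<in> lists Sig \<and> P (map_option (tau QL dL) (f u)))"
    proof (cases "f u")
      case None
      then show ?thesis by (simp add: P_def)
    next
      case (Some v)
      then have uv: "u \<in> lists Sig" "v \<in> lists Gamma" using I(1) by blast+
      have "tau QL dL v q0L = fold (\<lambda>a q. dL q a) v q0L" using L(2) by (simp add: tau_def)
      then show ?thesis using Some uv L(5) by (simp add: P_def)
    qed
  qed
  then show ?thesis using recog_regular[OF assms(1) I(2), of P] by (simp only:)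
qed

end
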